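(* Let $\mathcal{I}=\langle N,T,\{O_t\}_{t\in[T]},\mathbf{v}\rangle$ be an informed online fair division instance with $T$ rounds and $m$ items in total, in which several items may arrive in the same round. Label the items $o_1,\dots,o_m$ so that whenever $o_j\in O_r$, $o_{j'}\in O_{r'}$ and $r<r'$, we have $j<j'$ (items within a round are ordered arbitrarily), and let $\mathcal{I}^{=1}=\langle N,m,\{\widetilde O_t\}_{t\in[m]},\mathbf{v}\rangle$ be the instance with the same agents and valuations, $m$ rounds, and $\widetilde O_t=\{o_t\}$ for every $t\in[m]$. If a TEF1 allocation exists for $\mathcal{I}^{=1}$, then a TEF1 allocation exists for $\mathcal{I}$.
   Context: An instance $\langle N,T,\{O_t\}_{t\in[T]},\mathbf{v}\rangle$ consists of agents $N=[n]$, and pairwise disjoint sets $O_1,\dots,O_T$ of indivisible items, where $O_t$ is the set of items arriving in round $t$; $O^t=\bigcup_{\ell\le t}O_\ell$ and $O=O^T$. Each agent $i$ has an additive valuation $v_i:2^O\to\mathbb{R}$, $v_i(S)=\sum_{o\in S}v_i(o)$. Either all items are goods ($v_i(o)\ge 0$ for all $i,o$) or all are chores ($v_i(o)\le0$ for all $i,o$). An allocation $\mathcal{A}=(A_1,\dots,A_n)$ is an ordered partition of $O$; for $t\in[T]$, $\mathcal{A}^t=(A_1\cap O^t,\dots,A_n\cap O^t)$. An allocation $(B_1,\dots,B_n)$ is EF1 if for all $i,j\in N$ there is a good $g\in B_j$ with $v_i(B_i)\ge v_i(B_j\setminus\{g\})$ (goods case), resp. a chore $c\in B_i$ with $v_i(B_i\setminus\{c\})\ge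 v_i(B_j)$ (chores case); this holds vacuously-as-true when the relevant bundle is empty and there is no envy (i.e. if $v_i(B_i)\ge v_i(B_j)$). An allocation $\mathcal{A}$ is TEF1 (temporal EF1) if $\mathcal{A}^t$ is EF1 for every $t\in[T]$. *)

theory Defs
  imports Complex_Main
begin

datatype item_kind = Goods | Chores

text \<open>Agents are 1..n, rounds are 1..T, O t is the set of items arriving in round t.\<close>

definition items_upto :: "(nat \<Rightarrow> 'o set) \<Rightarrow> nat \<Rightarrow> 'o set" where
  "items_upto Ob t = (\<Union>l\<in>{1..t}. Ob l)"

definition val :: "(nat \<Rightarrow> 'o \<Rightarrow> real) \<Rightarrow> nat \<Rightarrow> 'o set \<Rightarrow> real" where
  "val v i S = (\<Sum>x\<in>S. v i x)"

definition signs_ok :: "item_kind \<Rightarrow> nat \<Rightarrow> (nat \<Rightarrow> 'o \<Rightarrow> real) \<Rightarrow> 'o set \<Rightarrow> bool" where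
  "signs_ok k n v S = (case k of
      Goods \<Rightarrow> (\<forall>i\<in>{1..n}. \<forall>x\<in>S. v i x \<ge> 0)
    | Chores \<Rightarrow> (\<forall>i\<in>{1..n}. \<forall>x\<in>S. v i x \<le> 0))"

definition is_allocation :: "nat \<Rightarrow> 'o set \<Rightarrow> (nat \<Rightarrow> 'o set) \<Rightarrow> bool" where
  "is_allocation n S A =
     ((\<forall>i\<in>{1..n}. \<forall>j\<in>{1..n}. i \<noteq> j \<longrightarrow> A i \<inter> A j = {}) \<and>
      (\<Union>i\<in>{1..n}. A i) = S)"

definition EF1 :: "item_kind \<Rightarrow> nat \<Rightarrow> (nat \<Rightarrow> 'o \<Rightarrow> real) \<Rightarrow> (nat \<Rightarrow> 'o set) \<Rightarrow> bool" where
  "EF1 k n v B = (\<forall>i\<in>{1..n}. \<forall>j\<in>{1..n}.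
      val v i (B i) \<ge> val v i (B j) \<or>
      (case k of
         Goods \<Rightarrow> (\<exists>g\<in>B j. val v i (B i) \<ge> val v i (B j - {g}))
       | Chores \<Rightarrow> (\<exists>c\<in>B i. val v i (B i - {c}) \<ge> val v i (B j))))"

definition TEF1 :: "item_kind \<Rightarrow> nat \<Rightarrow> (nat \<Rightarrow> 'o \<Rightarrow> real) \<Rightarrow> (nat \<Rightarrow> 'o set) \<Rightarrow> nat
                    \<Rightarrow> (nat \<Rightarrow> 'o set) \<Rightarrow> bool" where
  "TEF1 k n v Ob T A = (\<forall>t\<in>{1..T}. EF1 k n v (\<lambda>i. A i \<inter> items_upto Ob t))"

end

theory Submission
  imports Defs
begin

lemma iu_single: "items_upto (\<lambda>t. {f t}) s = f ` {1..s}"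
  unfolding items_upto_def by auto

lemma iu_mono: "t \<le> T \<Longrightarrow> items_upto Ob t \<subseteq> items_upto Ob T"
  unfolding items_upto_def by (auto intro!: bexI)

lemma EF1_empty: "EF1 k n v (\<lambda>i. {})"
  unfolding EF1_def val_def by auto

theorem lemma1:
  fixes n T m :: nat
    and Ob :: "nat \<Rightarrow> 'o set"
    and v :: "nat \<Rightarrow> 'o \<Rightarrow> real"
    and k :: item_kind
    and ord :: "nat \<Rightarrow> 'o"
  assumes disj: "\<forall>t1\<in>{1..T}. \<forall>t2\<in>{1..T}. t1 \<noteq> t2 \<longrightarrow> Ob t1 \<inter> Ob t2 = {}"
    and signs: "signs_ok k n v (items_upto Ob T)"
    and lab_bij: "bij_betw ord {1..m} (items_upto Ob T)"
    and lab_order: "\<forall>j\<in>{1..m}. \<forall>j'\<in>{1..m}. \<forall>r\<in>{1..T}. \<forall>r'\<in>{1..T}.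
                      ord j \<in> Ob r \<longrightarrow> ord j' \<in> Ob r' \<longrightarrow> r < r' \<longrightarrow> j < j'"
    and single: "\<exists>A. is_allocation n (items_upto (\<lambda>t. {ord t}) m) A \<and>
                     TEF1 k n v (\<lambda>t. {ord t}) m A"
  shows "\<exists>A. is_allocation n (items_upto Ob T) A \<and> TEF1 k n v Ob T A"
proof -
  obtain A where alloc: "is_allocation n (items_upto (\<lambda>t. {ord t}) m) A"
    and tef: "TEF1 k n v (\<lambda>t. {ord t}) m A" using single by blast
  have img: "ord ` {1..m} = items_upto Ob T" using lab_bij by (simp add: bij_betw_def)
  have S: "items_upto (\<lambda>t. {ord t}) m = items_upto Ob T" using img iu_single by metis
  have "TEF1 k n v Ob T A"
    unfolding TEF1_def
  proof
    fix t assume t: "t \<in> {1..T}"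
    define J where "J = {j\<in>{1..m}. ord j \<in> items_upto Ob t}"
    have finJ: "finite J" unfolding J_def by auto
    have OJ: "items_upto Ob t = ord ` J"
    proof
      show "items_upto Ob t \<subseteq> ord ` J"
      proof
        fix x assume x: "x \<in> items_upto Ob t"
        then have "x \<in> ord ` {1..m}" using iu_mono[of t T Ob] t img by auto
        then obtain j where "j \<in> {1..m}" "x = ord j" by auto
        then show "x \<in> ord ` J" using x unfolding J_def by auto
      qed
    qed (auto simp: J_def)
    show "EF1 k n v (\<lambda>i. A i \<inter> items_upto Ob t)"
    proof (cases "J = {}")
      case True
      then show ?thesis using OJ EF1_empty by simp
    next
      case False
      define s where "s = Max J"
      have sJ: "s \<in> J" using False finJ s_def by simp
      have Jeq: "J = {1..s}"
      proof
        show "J \<subseteq> {1..s}" using finJ s_def by (auto simp: J_def)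
        show "{1..s} \<subseteq> J"
        proof
          fix j assume j: "j \<in> {1..s}"
          have sm: "s \<in> {1..m}" using sJ by (auto simp: J_def)
          then have jm: "j \<in> {1..m}" using j by auto
          show "j \<in> J"
          proof (rule ccontr)
            assume nj: "j \<notin> J"
            then have nt: "ord j \<notin> items_upto Ob t" using jm by (auto simp: J_def)
            have "ord j \<in> items_upto Ob T" using jm img by auto
            then obtain r' where r': "r' \<in> {1..T}" "ord j \<in> Ob r'" unfolding items_upto_def by auto
            have "r' > t" using nt r' unfolding items_upto_def by fastforce
            have "ord s \<in> items_upto Ob t" using sJ by (auto simp: J_def)
            then obtain r where r: "r \<in> {1..t}" "ord s \<in> Ob r" unfolding items_upto_def by auto
            have "r \<in> {1..T}" using r t by auto
            then have "s < j" using lab_order sm jm r r' \<open>r' > t\<close> by fastforce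
            then show False using j by auto
          qed
        qed
      qed
      have "s \<in> {1..m}" using sJ by (auto simp: J_def)
      then have "EF1 k n v (\<lambda>i. A i \<inter> items_upto (\<lambda>t. {ord t}) s)"
        using tef unfolding TEF1_def by auto
      moreover have "items_upto (\<lambda>t. {ord t}) s = items_upto Ob t"
        using OJ Jeq iu_single by metis
      ultimately show ?thesis by simp
    qed
  qed
  then show ?thesis using alloc S by auto
qed

end
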